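(* Let $\alpha_0>0$, $\alpha_1\in\mathbb{R}$, $0<\gamma\notin\mathbb{N}$, $\tilde\alpha_0=\alpha_0/\cos(\frac{\pi}{2}\gamma)$, and $\alpha^*_{pl+}(\omega)=\tilde\alpha_0(-i\omega)^\gamma+\alpha_1(-i\omega)$ for $\omega\in\mathbb{R}$. Let $K(\vec x,t)=\frac{1}{\sqrt{2\pi}}\mathcal{F}^{-1}\{e^{-\alpha^*_{pl+}(\cdot)|\vec x|}\}(t)$. If $\gamma>1$, then $K$ is not causal. If $\gamma\in(0,1)$, then $K$ is causal if and only if $\alpha_1\in[0,\infty)$. *)

theory Defs
  imports "HOL-Analysis.Analysis"
begin

text \<open>Fourier convention: F{f}(w) = integral of f(t) e^{i w t} dt,
  inverse F^{-1}{g}(t) = (1/(2 pi)) integral of g(w) e^{-i w t} dw.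
  Complex powers use the principal branch (Isabelle's complex powr).\<close>

definition alpha_tilde0 :: "real \<Rightarrow> real \<Rightarrow> real" where
  "alpha_tilde0 a0 \<gamma> = a0 / cos (pi / 2 * \<gamma>)"

definition alpha_pl_plus :: "real \<Rightarrow> real \<Rightarrow> real \<Rightarrow> real \<Rightarrow> complex" where
  "alpha_pl_plus a0 a1 \<gamma> \<omega> =
     complex_of_real (alpha_tilde0 a0 \<gamma>) * ((- \<i> * complex_of_real \<omega>) powr complex_of_real \<gamma>)
     + complex_of_real a1 * (- \<i> * complex_of_real \<omega>)"

definition inv_fourier :: "(real \<Rightarrow> complex) \<Rightarrow> real \<Rightarrow> complex" where
  "inv_fourier g t = complex_of_real (1 / (2 * pi)) *
     integral\<^sup>L lborel (\<lambda>\<omega>. g \<omega> * exp (- \<i> * complex_of_real (\<omega> * t)))"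

definition K_pl :: "real \<Rightarrow> real \<Rightarrow> real \<Rightarrow> 'a::euclidean_space \<Rightarrow> real \<Rightarrow> complex" where
  "K_pl a0 a1 \<gamma> x t = complex_of_real (1 / sqrt (2 * pi)) *
     inv_fourier (\<lambda>\<omega>. exp (- alpha_pl_plus a0 a1 \<gamma> \<omega> * complex_of_real (norm x))) t"

text \<open>Causality: K(x,t) = 0 for all t < 0 (at every x \<noteq> 0; at x = 0 the
  kernel is the distribution delta(t)/sqrt(2 pi), which is trivially causal).\<close>
definition causal :: "('a::euclidean_space \<Rightarrow> real \<Rightarrow> complex) \<Rightarrow> bool" where
  "causal K \<longleftrightarrow> (\<forall>x. x \<noteq> 0 \<longrightarrow> (\<forall>t<0. K x t = 0))"

end

theory Submission
  imports Defs "HOL-Probability.Probability" "HOL-Complex_Analysis.Complex_Analysis" "HOL-Real_Asymp.Real_Asymp"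
begin


definition PP :: "real \<Rightarrow> real \<Rightarrow> complex" where
  "PP g \<omega> = (- \<i> * complex_of_real \<omega>) powr complex_of_real g"

lemma powr_polar:
  fixes w :: complex and g :: real
  assumes "w \<noteq> 0"
  shows "w powr of_real g = of_real (norm w powr g) * exp (\<i> * of_real (g * Arg w))"
proof -
  have "w powr of_real g = exp (of_real g * Ln w)" using assms by (simp add: powr_def)
  also have "Ln w = of_real (ln (norm w)) + \<i> * of_real (Arg w)" using Ln_Arg[OF assms] by simp
  also have "exp (of_real g * (of_real (ln (norm w)) + \<i> * of_real (Arg w))) =
      exp (of_real (g * ln (norm w))) * exp (\<i> * of_real (g * Arg w))"
    by (simp add: algebra_simps exp_add)
  also have "exp (of_real (g * ln (norm w))) = (of_real (norm w powr g) :: complex)"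
    using assms by (simp add: powr_def flip: exp_of_real)
  finally show ?thesis .
qed

lemma Arg_mii: "x > 0 \<Longrightarrow> Arg (- (\<i> * complex_of_real x)) = - pi/2"
proof -
  assume x: "x > 0"
  have e: "- (\<i> * complex_of_real x) = complex_of_real x * (-\<i>)" by simp
  have "Arg (complex_of_real x * (-\<i>)) = Arg (-\<i>)" by (rule Arg_times_of_real) (use x in auto)
  also have "\<dots> = - pi/2" by (simp add: Arg_eq_Im_Ln)
  finally show ?thesis unfolding e .
qed

lemma Arg_mii_neg: "x < 0 \<Longrightarrow> Arg (- (\<i> * complex_of_real x)) = pi/2"
proof -
  assume x: "x < 0"
  have e: "- (\<i> * complex_of_real x) = complex_of_real (-x) * \<i>" by simp
  have "Arg (complex_of_real (-x) * \<i>) = Arg \<i>" by (rule Arg_times_of_real) (use x in auto)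
  also have "\<dots> = pi/2" by (simp add: Arg_eq_Im_Ln)
  finally show ?thesis unfolding e .
qed

lemma PP_eq: "PP g \<omega> = of_real (\<bar>\<omega>\<bar> powr g) * exp (- \<i> * of_real (g * pi / 2 * sgn \<omega>))"
proof (cases "\<omega> = 0")
  case True then show ?thesis by (simp add: PP_def)
next
  case False
  then have nz: "- \<i> * complex_of_real \<omega> \<noteq> 0" by simp
  have n: "norm (- \<i> * complex_of_real \<omega>) = \<bar>\<omega>\<bar>" by (simp add: norm_mult)
  show ?thesis
  proof (cases "\<omega> > 0")
    case True
    have A: "Arg (- \<i> * complex_of_real \<omega>) = - pi/2" using Arg_mii[OF True] by simp
    show ?thesis unfolding PP_def powr_polar[OF nz] n A using True
      by (simp add: algebra_simps)
  next
    case f: False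
    with False have "\<omega> < 0" by simp
    then have A: "Arg (- \<i> * complex_of_real \<omega>) = pi/2" using Arg_mii_neg[of \<omega>] by simp
    show ?thesis unfolding PP_def powr_polar[OF nz] n A using \<open>\<omega> < 0\<close>
      by (simp add: algebra_simps)
  qed
qed

lemma norm_PP: "norm (PP g \<omega>) = \<bar>\<omega>\<bar> powr g"
  by (simp add: PP_eq norm_mult)

lemma Re_PP: "Re (PP g \<omega>) = \<bar>\<omega>\<bar> powr g * cos (g * pi / 2)"
proof -
  have "cos (g * pi / 2 * sgn \<omega>) = cos (g * pi / 2) \<or> \<omega> = 0"
    by (cases "\<omega> > 0"; cases "\<omega> < 0") auto
  then show ?thesis by (auto simp: PP_eq Re_exp)
qed

lemma PP_scale: "c > 0 \<Longrightarrow> PP g (c * \<omega>) = of_real (c powr g) * PP g \<omega>"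
  by (simp add: PP_eq abs_mult powr_mult sgn_mult)

lemma measurable_PP[measurable]: "PP g \<in> borel_measurable borel"
  unfolding PP_eq[abs_def] by measurable

definition GG :: "real \<Rightarrow> real \<Rightarrow> real \<Rightarrow> complex" where
  "GG b g \<omega> = exp (- (of_real b * PP g \<omega>))"

lemma measurable_GG[measurable]: "GG b g \<in> borel_measurable borel"
  unfolding GG_def by measurable

lemma norm_GG:
  assumes "cos (g * pi / 2) \<noteq> 0"
  shows "norm (GG (alpha_tilde0 a0 g) g \<omega>) = exp (- a0 * \<bar>\<omega>\<bar> powr g)"
proof -
  have "cos (pi * g / 2) = cos (g * pi / 2)" by (simp add: mult.commute)
  then show ?thesis using assms by (simp add: GG_def Re_PP alpha_tilde0_def)
qed

lemma exp_ge_term: "(x::real) \<ge> 0 \<Longrightarrow> x ^ n / fact n \<le> exp x"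
proof -
  assume x: "x \<ge> 0"
  have s: "summable (\<lambda>k. x ^ k / fact k)" using exp_converges[of x] by (simp add: sums_iff divide_inverse mult.commute)
  have "x ^ n / fact n = (\<Sum>k\<in>{n}. x ^ k / fact k)" by simp
  also have "\<dots> \<le> (\<Sum>k. x ^ k / fact k)"
    by (rule sum_le_suminf[OF s]) (use x in auto)
  also have "\<dots> = exp x" using exp_converges[of x] by (simp add: sums_iff divide_inverse mult.commute)
  finally show ?thesis .
qed


lemma integrable_inv_sq: "integrable lborel (\<lambda>x::real. inverse (1 + x^2))"
  using integrable_inverse_1_plus_square by (simp add: set_integrable_def)

lemma exp_powr_bound:
  fixes a g :: real
  assumes a: "a > 0" and g: "g > 0"
  shows "\<exists>C. \<forall>\<omega>. exp (- a * \<bar>\<omega>\<bar> powr g) \<le> C * inverse (1 + \<omega>^2)"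
proof -
  define n where "n = nat \<lceil>2 / g\<rceil>"
  have ng: "real n * g \<ge> 2"
  proof -
    have "real n \<ge> 2 / g" unfolding n_def by linarith
    then show ?thesis using g by (simp add: field_simps)
  qed
  define C where "C = 2 + 2 * fact n / a ^ n"
  have Cpos: "2 * fact n / a ^ n \<ge> 0" using a by simp
  show ?thesis
  proof (intro exI allI)
    fix \<omega> :: real
    have ipos: "inverse (1 + \<omega>^2) > 0" by (simp add: add_pos_nonneg)
    show "exp (- a * \<bar>\<omega>\<bar> powr g) \<le> C * inverse (1 + \<omega>^2)"
    proof (cases "\<bar>\<omega>\<bar> \<le> 1")
      case True
      have "\<omega>^2 \<le> 1" using True abs_square_le_1 by blast
      moreover have pos: "0 < 1 + \<omega>^2" by (simp add: add_pos_nonneg)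
      ultimately have "inverse (1 + \<omega>^2) \<ge> 1/2" by (simp add: inverse_eq_divide le_divide_eq)
      moreover have "C * inverse (1 + \<omega>^2) = 2 * inverse (1 + \<omega>^2) + (2 * fact n / a ^ n) * inverse (1 + \<omega>^2)"
        by (simp add: C_def distrib_right)
      moreover have "(2 * fact n / a ^ n) * inverse (1 + \<omega>^2) \<ge> 0"
        using mult_nonneg_nonneg[OF Cpos less_imp_le[OF ipos]] .
      ultimately have "C * inverse (1 + \<omega>^2) \<ge> 1" by linarith
      moreover have "exp (- a * \<bar>\<omega>\<bar> powr g) \<le> 1" using a by simp
      ultimately show ?thesis by linarith
    next
      case False
      then have w1: "\<bar>\<omega>\<bar> > 1" by simp
      define y where "y = a * \<bar>\<omega>\<bar> powr g"
      have ypos: "y > 0" using a w1 by (simp add: y_def)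
      have "y ^ n = a ^ n * \<bar>\<omega>\<bar> powr (real n * g)"
        using w1 by (simp add: y_def power_mult_distrib powr_realpow[symmetric] powr_powr mult.commute)
      moreover have "\<bar>\<omega>\<bar> powr (real n * g) \<ge> \<bar>\<omega>\<bar> powr 2"
        using w1 ng by (intro powr_mono) auto
      moreover have "\<bar>\<omega>\<bar> powr 2 = \<omega>^2" using w1 by (simp add: powr_realpow)
      ultimately have yn: "y ^ n \<ge> a ^ n * \<omega>^2"
        using a by (metis mult_left_mono zero_le_power less_imp_le)
      have "y ^ n / fact n \<le> exp y" using ypos exp_ge_term by (simp add: less_imp_le)
      then have "exp (-y) \<le> fact n / y ^ n"
        using ypos by (simp add: exp_minus field_simps)
      also have "\<dots> \<le> fact n / (a ^ n * \<omega>^2)"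
      proof (rule divide_left_mono)
        show "a ^ n * \<omega>^2 \<le> y ^ n" by (rule yn)
        show "0 \<le> (fact n :: real)" by simp
        have "0 < a ^ n * \<omega>^2" using a w1 by simp
        then show "0 < y ^ n * (a ^ n * \<omega>^2)" using ypos by simp
      qed
      also have "\<dots> \<le> C * inverse (1 + \<omega>^2)"
      proof -
        have "1 < \<bar>\<omega>\<bar> * \<bar>\<omega>\<bar>" by (rule less_1_mult[OF w1 w1])
        then have "1 < \<omega>^2" by (simp add: power2_eq_square abs_mult_self_eq)
        then have "1 + \<omega>^2 \<le> 2 * \<omega>^2" by simp
        then have "inverse (1 + \<omega>^2) \<ge> inverse (2 * \<omega>^2)"
          using w1 by (intro le_imp_inverse_le) (auto simp: add_pos_nonneg)
        then have "(2 * fact n / a ^ n) * inverse (1 + \<omega>^2) \<ge> (2 * fact n / a ^ n) * inverse (2 * \<omega>^2)"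
          using Cpos by (rule mult_left_mono)
        moreover have "(2 * fact n / a ^ n) * inverse (2 * \<omega>^2) = fact n / (a ^ n * \<omega>^2)"
          by (simp add: field_simps)
        ultimately have X: "(2 * fact n / a ^ n) * inverse (1 + \<omega>^2) \<ge> fact n / (a ^ n * \<omega>^2)"
          by simp
        have Y: "C * inverse (1 + \<omega>^2) = 2 * inverse (1 + \<omega>^2) + (2 * fact n / a ^ n) * inverse (1 + \<omega>^2)"
          by (simp add: C_def distrib_right)
        have Z: "2 * inverse (1 + \<omega>^2) \<ge> 0" using ipos by simp
        show ?thesis using X Y Z by linarith
      qed
      finally show ?thesis by (simp add: y_def)
    qed
  qed
qed

lemma integrable_exp_powr:
  fixes a g :: real
  assumes a: "a > 0" and g: "g > 0"
  shows "integrable lborel (\<lambda>\<omega>. exp (- a * \<bar>\<omega>\<bar> powr g))"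
proof -
  obtain C where C: "\<And>\<omega>. exp (- a * \<bar>\<omega>\<bar> powr g) \<le> C * inverse (1 + \<omega>^2)"
    using exp_powr_bound[OF a g] by blast
  show ?thesis
  proof (rule Bochner_Integration.integrable_bound)
    show "integrable lborel (\<lambda>\<omega>. C * inverse (1 + \<omega>^2))" using integrable_inv_sq by simp
    show "AE x in lborel. norm (exp (- a * \<bar>x\<bar> powr g)) \<le> norm (C * inverse (1 + x^2))"
      using C by (auto intro!: AE_I2 order_trans[OF _ abs_ge_self])
  qed measurable
qed

lemma integrable_GG:
  assumes "cos (g * pi / 2) \<noteq> 0" "a0 > 0" "g > 0"
  shows "integrable lborel (\<lambda>\<omega>. GG (alpha_tilde0 a0 g) g \<omega> * exp (- \<i> * of_real (\<omega> * w)))"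
proof (rule Bochner_Integration.integrable_bound)
  show "integrable lborel (\<lambda>\<omega>. exp (- a0 * \<bar>\<omega>\<bar> powr g))" by (rule integrable_exp_powr) (use assms in auto)
  show "AE x in lborel. norm (GG (alpha_tilde0 a0 g) g x * exp (- \<i> * of_real (x * w))) \<le> norm (exp (- a0 * \<bar>x\<bar> powr g))"
    using assms(1) by (intro AE_I2) (simp add: norm_mult norm_GG)
qed measurable



definition hh :: "real \<Rightarrow> real \<Rightarrow> real \<Rightarrow> complex" where
  "hh b g w = (\<integral>\<omega>. GG b g \<omega> * exp (- \<i> * of_real (\<omega> * w)) \<partial>lborel)"

lemma K_scale:
  fixes x :: "'a::euclidean_space"
  assumes "x \<noteq> 0" "g > 0"
  shows "K_pl a0 a1 g x t = of_real (1/sqrt(2*pi) * (1/(2*pi)) * norm x powr (-1/g)) *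
           hh (alpha_tilde0 a0 g) g (norm x powr (-1/g) * (t - a1 * norm x))"
proof -
  define r where "r = norm x"
  define l where "l = r powr (-1/g)"
  define b where "b = alpha_tilde0 a0 g"
  have r: "r > 0" using assms by (simp add: r_def)
  have l: "l > 0" using r by (simp add: l_def)
  have lg: "l powr g * r = 1"
  proof -
    have "l powr g = r powr (-1/g * g)" by (simp add: l_def powr_powr)
    also have "-1/g*g = -1" using assms by simp
    also have "r powr (-1) = inverse r" using r by (simp add: powr_minus)
    finally show ?thesis using r by simp
  qed
  have lg': "complex_of_real (l powr g) * complex_of_real r = 1"
    by (metis lg of_real_1 of_real_mult)
  define F where "F \<omega> = exp (- alpha_pl_plus a0 a1 g \<omega> * of_real r) * exp (- \<i> * of_real (\<omega> * t))" for \<omega>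
  have K: "K_pl a0 a1 g x t = of_real (1/sqrt(2*pi)) * (of_real (1/(2*pi)) * integral\<^sup>L lborel F)"
    unfolding K_pl_def inv_fourier_def F_def r_def by simp
  have aff: "integral\<^sup>L lborel F = l *\<^sub>R integral\<^sup>L lborel (\<lambda>v. F (0 + l * v))"
    using lborel_integral_real_affine[of l F 0] l by simp
  have Fl: "F (l * v) = GG b g v * exp (- \<i> * of_real (v * (l * (t - a1 * r))))" for v
  proof -
    have P: "PP g (l * v) = of_real (l powr g) * PP g v" using PP_scale[OF l] .
    have al: "alpha_pl_plus a0 a1 g (l * v) = of_real b * PP g (l * v) + of_real a1 * (- \<i> * of_real (l * v))"
      unfolding alpha_pl_plus_def PP_def b_def by simp
    have e1: "of_real b * (of_real (l powr g) * PP g v) * of_real r = of_real b * PP g v * (of_real (l powr g) * of_real r)"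
      by (simp add: algebra_simps)
    have e2: "- (of_real b * (of_real (l powr g) * PP g v) + of_real a1 * (- \<i> * of_real (l * v))) * of_real r
              + (- \<i> * of_real (l * v * t))
            = - (of_real b * PP g v) + (- \<i> * of_real (v * (l * (t - a1 * r))))"
    proof -
      have "- (of_real b * (of_real (l powr g) * PP g v) + of_real a1 * (- \<i> * of_real (l * v))) * of_real r
              + (- \<i> * of_real (l * v * t))
          = - (of_real b * (of_real (l powr g) * PP g v) * of_real r) + \<i> * of_real (a1 * l * v * r) - \<i> * of_real (l * v * t)"
        by (simp add: algebra_simps)
      also have "\<dots> = - (of_real b * PP g v) + \<i> * of_real (a1 * l * v * r) - \<i> * of_real (l * v * t)"
        unfolding e1 lg' by simp
      also have "\<dots> = - (of_real b * PP g v) + (- \<i> * of_real (v * (l * (t - a1 * r))))"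
        by (simp add: algebra_simps)
      finally show ?thesis .
    qed
    have "F (l * v) = exp (- (of_real b * (of_real (l powr g) * PP g v) + of_real a1 * (- \<i> * of_real (l * v))) * of_real r
              + (- \<i> * of_real (l * v * t)))"
      unfolding F_def al P by (simp only: exp_add)
    also have "\<dots> = exp (- (of_real b * PP g v) + (- \<i> * of_real (v * (l * (t - a1 * r)))))"
      unfolding e2 ..
    also have "\<dots> = GG b g v * exp (- \<i> * of_real (v * (l * (t - a1 * r))))"
      by (simp only: GG_def exp_add)
    finally show ?thesis .
  qed
  have "integral\<^sup>L lborel F = l *\<^sub>R hh b g (l * (t - a1 * r))"
    unfolding aff hh_def by (simp add: Fl)
  then show ?thesis unfolding K r_def[symmetric] l_def[symmetric] b_def[symmetric]
    by (simp add: scaleR_conv_of_real)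
qed

lemma causal_iff:
  assumes g: "g > 0"
  shows "causal (K_pl a0 a1 g :: 'a::euclidean_space \<Rightarrow> real \<Rightarrow> complex) \<longleftrightarrow>
         (\<forall>r>0. \<forall>t<0. hh (alpha_tilde0 a0 g) g (r powr (-1/g) * (t - a1 * r)) = 0)"
proof
  assume c: "causal (K_pl a0 a1 g :: 'a::euclidean_space \<Rightarrow> real \<Rightarrow> complex)"
  show "\<forall>r>0. \<forall>t<0. hh (alpha_tilde0 a0 g) g (r powr (-1/g) * (t - a1 * r)) = 0"
  proof (intro allI impI)
    fix r t :: real assume r: "r > 0" and t: "t < 0"
    obtain e :: 'a where e: "e \<in> Basis" using nonempty_Basis by blast
    define x where "x = r *\<^sub>R e"
    have nx: "norm x = r" using r e by (simp add: x_def)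
    then have x0: "x \<noteq> 0" using r by auto
    have "K_pl a0 a1 g x t = 0" using c x0 t unfolding causal_def by blast
    then have "of_real (1/sqrt(2*pi) * (1/(2*pi)) * r powr (-1/g)) *
           hh (alpha_tilde0 a0 g) g (r powr (-1/g) * (t - a1 * r)) = 0"
      using K_scale[OF x0 g, of a0 a1 t] nx by simp
    moreover have "of_real (1/sqrt(2*pi) * (1/(2*pi)) * r powr (-1/g)) \<noteq> (0::complex)"
      using r by simp
    ultimately show "hh (alpha_tilde0 a0 g) g (r powr (-1/g) * (t - a1 * r)) = 0" by simp
  qed
next
  assume h: "\<forall>r>0. \<forall>t<0. hh (alpha_tilde0 a0 g) g (r powr (-1/g) * (t - a1 * r)) = 0"
  show "causal (K_pl a0 a1 g :: 'a::euclidean_space \<Rightarrow> real \<Rightarrow> complex)"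
    unfolding causal_def
  proof (intro allI impI)
    fix x :: 'a and t :: real assume x0: "x \<noteq> 0" and t: "t < 0"
    have "norm x > 0" using x0 by simp
    then show "K_pl a0 a1 g x t = 0" using K_scale[OF x0 g, of a0 a1 t] h t by simp
  qed
qed



lemma GG_cont0:
  assumes g: "g > 0"
  shows "isCont (GG b g) 0"
proof -
  have "(PP g \<longlongrightarrow> 0) (at 0)"
  proof -
    have "((\<lambda>\<omega>. \<bar>\<omega>\<bar> powr g) \<longlongrightarrow> 0) (at (0::real))"
      by (rule tendsto_zero_powrI) (use g in \<open>auto intro!: tendsto_eq_intros\<close>)
    then show ?thesis by (subst tendsto_norm_zero_iff[symmetric]) (simp add: norm_PP)
  qed
  moreover have "PP g 0 = 0" by (simp add: PP_def)
  ultimately have "isCont (PP g) 0" by (simp add: isCont_def)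
  then show ?thesis unfolding GG_def by (intro continuous_intros)
qed

lemma GG0: "GG b g 0 = 1" by (simp add: GG_def PP_def)

lemma norm_GG_le1:
  assumes "cos (g * pi / 2) \<noteq> 0" "a0 > 0" "g > 0"
  shows "norm (GG (alpha_tilde0 a0 g) g \<omega>) \<le> 1"
  using assms by (simp add: norm_GG)

lemma char_gauss:
  "(\<integral>s. of_real (std_normal_density s) * exp (\<i> * of_real (\<theta> * s)) \<partial>lborel) =
     of_real (sqrt (2 * pi) * std_normal_density \<theta>)"
proof -
  have "char std_normal_distribution \<theta> = complex_of_real (exp (- (\<theta>^2) / 2))"
    by (simp add: char_std_normal_distribution)
  moreover have "char std_normal_distribution \<theta> =
      (\<integral>s. of_real (std_normal_density s) * exp (\<i> * of_real (\<theta> * s)) \<partial>lborel)"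
    unfolding char_def by (subst integral_density) (auto simp: scaleR_conv_of_real)
  moreover have "exp (- (\<theta>^2) / 2) = sqrt (2 * pi) * std_normal_density \<theta>"
    by (simp add: std_normal_density_def)
  ultimately show ?thesis by simp
qed

lemma hh_nonzero:
  assumes cg: "cos (g * pi / 2) \<noteq> 0" and a0: "a0 > 0" and g: "g > 0"
  shows "\<exists>w. hh (alpha_tilde0 a0 g) g w \<noteq> 0"
proof (rule ccontr)
  define b where "b = alpha_tilde0 a0 g"
  assume "\<not> (\<exists>w. hh (alpha_tilde0 a0 g) g w \<noteq> 0)"
  then have h0: "\<And>w. hh b g w = 0" by (simp add: b_def)
  let ?\<phi> = "std_normal_density"
  have intG: "integrable lborel (\<lambda>\<omega>. GG b g \<omega> * exp (- \<i> * of_real (\<omega> * w)))" for w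
    unfolding b_def by (rule integrable_GG[OF cg a0 g])
  have nG: "norm (GG b g \<omega>) = exp (- a0 * \<bar>\<omega>\<bar> powr g)" for \<omega>
    unfolding b_def by (rule norm_GG[OF cg])
  have J: "(\<integral>v. GG b g (v / \<sigma>) * of_real (?\<phi> v) \<partial>lborel) = 0" if \<sigma>: "\<sigma> > 0" for \<sigma>
  proof -
    define f where "f s \<omega> = of_real (?\<phi> s) * (GG b g \<omega> * exp (- \<i> * of_real (\<omega> * (\<sigma> * s))))" for s \<omega>
    have fm[measurable]: "(\<lambda>(s, \<omega>). f s \<omega>) \<in> borel_measurable (lborel \<Otimes>\<^sub>M lborel)"
      unfolding f_def by measurable
    have nf: "norm (f s \<omega>) = ?\<phi> s * exp (- a0 * \<bar>\<omega>\<bar> powr g)" for s \<omega>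
      by (simp add: f_def norm_mult nG)
    have int: "integrable (lborel \<Otimes>\<^sub>M lborel) (\<lambda>(s, \<omega>). f s \<omega>)"
    proof (rule lborel_pair.Fubini_integrable)
      show "(\<lambda>(s, \<omega>). f s \<omega>) \<in> borel_measurable (lborel \<Otimes>\<^sub>M lborel)" by (rule fm)
      have "integrable lborel (\<lambda>s. ?\<phi> s * (\<integral>\<omega>. exp (- a0 * \<bar>\<omega>\<bar> powr g) \<partial>lborel))"
        by (intro integrable_mult_left) simp
      then show "integrable lborel (\<lambda>s. \<integral>\<omega>. norm (case (s, \<omega>) of (s, \<omega>) \<Rightarrow> f s \<omega>) \<partial>lborel)"
        by (simp add: nf)
      show "AE s in lborel. integrable lborel (\<lambda>\<omega>. case (s, \<omega>) of (s, \<omega>) \<Rightarrow> f s \<omega>)"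
        by (intro AE_I2) (simp only: prod.case f_def, intro integrable_mult_right intG)
    qed
    have "(\<integral>\<omega>. (\<integral>s. f s \<omega> \<partial>lborel) \<partial>lborel) = (\<integral>s. (\<integral>\<omega>. f s \<omega> \<partial>lborel) \<partial>lborel)"
      by (rule lborel_pair.Fubini_integral[OF int])
    also have "(\<integral>s. (\<integral>\<omega>. f s \<omega> \<partial>lborel) \<partial>lborel) = 0"
    proof -
      have "(\<integral>\<omega>. f s \<omega> \<partial>lborel) = of_real (?\<phi> s) * hh b g (\<sigma> * s)" for s
        unfolding f_def hh_def by simp
      then show ?thesis by (simp add: h0)
    qed
    also have "(\<lambda>\<omega>. (\<integral>s. f s \<omega> \<partial>lborel)) = (\<lambda>\<omega>. GG b g \<omega> * of_real (sqrt (2 * pi) * ?\<phi> (\<sigma> * \<omega>)))"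
    proof
      fix \<omega>
      have "(\<integral>s. f s \<omega> \<partial>lborel) = (\<integral>s. of_real (?\<phi> s) * exp (\<i> * of_real ((- (\<sigma> * \<omega>)) * s)) \<partial>lborel) * GG b g \<omega>"
        unfolding f_def by (simp add: algebra_simps)
      also have "\<dots> = GG b g \<omega> * of_real (sqrt (2 * pi) * ?\<phi> (\<sigma> * \<omega>))"
        unfolding char_gauss by (simp add: std_normal_density_def)
      finally show "(\<integral>s. f s \<omega> \<partial>lborel) = GG b g \<omega> * of_real (sqrt (2 * pi) * ?\<phi> (\<sigma> * \<omega>))" .
    qed
    finally have z: "(\<integral>\<omega>. GG b g \<omega> * of_real (sqrt (2 * pi) * ?\<phi> (\<sigma> * \<omega>)) \<partial>lborel) = 0" .
    have "(\<integral>\<omega>. GG b g \<omega> * of_real (sqrt (2 * pi) * ?\<phi> (\<sigma> * \<omega>)) \<partial>lborel)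
        = \<bar>1/\<sigma>\<bar> *\<^sub>R (\<integral>v. GG b g (0 + 1/\<sigma> * v) * of_real (sqrt (2 * pi) * ?\<phi> (\<sigma> * (0 + 1/\<sigma> * v))) \<partial>lborel)"
      using \<sigma> by (intro lborel_integral_real_affine) simp
    also have "\<dots> = of_real (sqrt (2 * pi) / \<sigma>) * (\<integral>v. GG b g (v / \<sigma>) * of_real (?\<phi> v) \<partial>lborel)"
    proof -
      have eq: "GG b g (0 + 1/\<sigma> * v) * of_real (sqrt (2 * pi) * ?\<phi> (\<sigma> * (0 + 1/\<sigma> * v)))
          = of_real (sqrt (2 * pi)) * (GG b g (v / \<sigma>) * of_real (?\<phi> v))" for v
        using \<sigma> by simp
      show ?thesis
        unfolding eq integral_mult_right_zero using \<sigma> by (simp add: scaleR_conv_of_real)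
    qed
    finally have "of_real (sqrt (2 * pi) / \<sigma>) * (\<integral>v. GG b g (v / \<sigma>) * of_real (?\<phi> v) \<partial>lborel) = 0"
      using z by simp
    then show ?thesis using \<sigma> by simp
  qed
  have lim: "(\<lambda>n. \<integral>v. GG b g (v / real (Suc n)) * of_real (?\<phi> v) \<partial>lborel) \<longlonglongrightarrow> (\<integral>v. of_real (?\<phi> v) \<partial>lborel)"
  proof (rule integral_dominated_convergence[where w = "?\<phi>"])
    show "(\<lambda>v. complex_of_real (?\<phi> v)) \<in> borel_measurable lborel" by measurable
    show "\<And>i. (\<lambda>v. GG b g (v / real (Suc i)) * complex_of_real (?\<phi> v)) \<in> borel_measurable lborel" by measurable
    show "integrable lborel ?\<phi>" by simp
    show "AE v in lborel. (\<lambda>i. GG b g (v / real (Suc i)) * complex_of_real (?\<phi> v)) \<longlonglongrightarrow> complex_of_real (?\<phi> v)"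
    proof (intro AE_I2)
      fix v :: real
      have "(\<lambda>i. v * inverse (real (Suc i))) \<longlonglongrightarrow> v * 0"
        by (intro tendsto_mult tendsto_const LIMSEQ_inverse_real_of_nat)
      then have "(\<lambda>i. v / real (Suc i)) \<longlonglongrightarrow> 0" by (simp add: divide_inverse)
      then have "(\<lambda>i. GG b g (v / real (Suc i))) \<longlonglongrightarrow> GG b g 0"
        using GG_cont0[OF g] isCont_tendsto_compose by blast
      then have "(\<lambda>i. GG b g (v / real (Suc i)) * complex_of_real (?\<phi> v)) \<longlonglongrightarrow> GG b g 0 * complex_of_real (?\<phi> v)"
        by (intro tendsto_mult tendsto_const)
      then show "(\<lambda>i. GG b g (v / real (Suc i)) * complex_of_real (?\<phi> v)) \<longlonglongrightarrow> complex_of_real (?\<phi> v)"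
        by (simp add: GG0)
    qed
    show "\<And>i. AE v in lborel. norm (GG b g (v / real (Suc i)) * complex_of_real (?\<phi> v)) \<le> ?\<phi> v"
    proof (intro AE_I2)
      fix i v
      have n1: "norm (GG b g (v / real (Suc i))) \<le> 1" unfolding nG using a0 by simp
      have "norm (GG b g (v / real (Suc i)) * complex_of_real (?\<phi> v)) = norm (GG b g (v / real (Suc i))) * ?\<phi> v"
        by (simp add: norm_mult)
      also have "\<dots> \<le> 1 * ?\<phi> v" by (rule mult_right_mono) (use n1 in auto)
      finally show "norm (GG b g (v / real (Suc i)) * complex_of_real (?\<phi> v)) \<le> ?\<phi> v" by simp
    qed
  qed
  moreover have "(\<lambda>n. \<integral>v. GG b g (v / real (Suc n)) * of_real (?\<phi> v) \<partial>lborel) = (\<lambda>n. 0)"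
    by (intro ext J) simp
  moreover have "(\<integral>v. of_real (?\<phi> v) \<partial>lborel) = (1::complex)"
    by (subst integral_complex_of_real) simp
  ultimately have "(\<lambda>n. 0::complex) \<longlonglongrightarrow> 1" by simp
  then show False using LIMSEQ_unique[OF tendsto_const] by fastforce
qed



lemma exp_lin_bound:
  fixes a c g :: real
  assumes a: "a > 0" and g: "g > 1" and c: "c \<ge> 0"
  shows "\<exists>D. \<forall>\<omega>. exp (c * \<bar>\<omega>\<bar>) * exp (- a * \<bar>\<omega>\<bar> powr g) \<le> D * inverse (1 + \<omega>^2)"
proof -
  define R where "R = max 1 (((c + 1) / a) powr (1 / (g - 1)))"
  have R1: "R \<ge> 1" by (simp add: R_def)
  have key: "(c + 1) * \<bar>\<omega>\<bar> - a * \<bar>\<omega>\<bar> powr g \<le> (c + 1) * R" for \<omega>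
  proof (cases "\<bar>\<omega>\<bar> \<le> R")
    case True
    have "(c + 1) * \<bar>\<omega>\<bar> \<le> (c + 1) * R" using True c by (intro mult_left_mono) auto
    moreover have "a * \<bar>\<omega>\<bar> powr g \<ge> 0" using a by simp
    ultimately show ?thesis by linarith
  next
    case False
    then have wR: "\<bar>\<omega>\<bar> > R" by simp
    then have w0: "\<bar>\<omega>\<bar> > 0" using R1 by simp
    have "\<bar>\<omega>\<bar> powr (g - 1) \<ge> R powr (g - 1)"
      using wR R1 g by (intro powr_mono2) auto
    moreover have "R powr (g - 1) \<ge> (((c + 1) / a) powr (1 / (g - 1))) powr (g - 1)"
      using g a c by (intro powr_mono2) (auto simp: R_def)
    moreover have "(((c + 1) / a) powr (1 / (g - 1))) powr (g - 1) = (c + 1) / a"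
      using g a c by (simp add: powr_powr)
    ultimately have "\<bar>\<omega>\<bar> powr (g - 1) \<ge> (c + 1) / a" by linarith
    then have "a * \<bar>\<omega>\<bar> powr (g - 1) \<ge> c + 1" using a by (simp add: field_simps)
    then have "a * \<bar>\<omega>\<bar> powr (g - 1) * \<bar>\<omega>\<bar> \<ge> (c + 1) * \<bar>\<omega>\<bar>"
      using w0 by (intro mult_right_mono) auto
    moreover have "\<bar>\<omega>\<bar> powr g = \<bar>\<omega>\<bar> powr (g - 1) * \<bar>\<omega>\<bar>"
    proof -
      have "\<bar>\<omega>\<bar> powr g = \<bar>\<omega>\<bar> powr ((g - 1) + 1)" by simp
      also have "\<dots> = \<bar>\<omega>\<bar> powr (g - 1) * \<bar>\<omega>\<bar> powr 1" by (rule powr_add)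
      also have "\<bar>\<omega>\<bar> powr 1 = \<bar>\<omega>\<bar>" using w0 by simp
      finally show ?thesis .
    qed
    ultimately have "(c + 1) * \<bar>\<omega>\<bar> - a * \<bar>\<omega>\<bar> powr g \<le> 0" by (simp add: mult.assoc)
    moreover have "(c + 1) * R \<ge> 0" using c R1 by simp
    ultimately show ?thesis by linarith
  qed
  show ?thesis
  proof (intro exI allI)
    fix \<omega> :: real
    have pos: "0 < 1 + \<omega>^2" by (simp add: add_pos_nonneg)
    have "1 + \<bar>\<omega>\<bar> + \<bar>\<omega>\<bar>^2 / 2 \<le> exp \<bar>\<omega>\<bar>" by (rule exp_lower_Taylor_quadratic) simp
    then have "(1 + \<omega>^2) / 2 \<le> exp \<bar>\<omega>\<bar>" by (simp add: power2_abs)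
    then have e1: "exp (- \<bar>\<omega>\<bar>) \<le> 2 * inverse (1 + \<omega>^2)"
      using pos by (simp add: exp_minus field_simps)
    have "exp (c * \<bar>\<omega>\<bar>) * exp (- a * \<bar>\<omega>\<bar> powr g) = exp ((c + 1) * \<bar>\<omega>\<bar> - a * \<bar>\<omega>\<bar> powr g) * exp (- \<bar>\<omega>\<bar>)"
      by (simp add: exp_add[symmetric] algebra_simps)
    also have "\<dots> \<le> exp ((c + 1) * R) * (2 * inverse (1 + \<omega>^2))"
      using key[of \<omega>] e1 by (intro mult_mono) auto
    finally show "exp (c * \<bar>\<omega>\<bar>) * exp (- a * \<bar>\<omega>\<bar> powr g) \<le> (2 * exp ((c + 1) * R)) * inverse (1 + \<omega>^2)"
      by simp
  qed
qed

lemma integrable_exp_lin: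
  fixes a c g :: real
  assumes a: "a > 0" and g: "g > 1" and c: "c \<ge> 0"
  shows "integrable lborel (\<lambda>\<omega>. exp (c * \<bar>\<omega>\<bar>) * exp (- a * \<bar>\<omega>\<bar> powr g))"
proof -
  obtain D where D: "\<And>\<omega>. exp (c * \<bar>\<omega>\<bar>) * exp (- a * \<bar>\<omega>\<bar> powr g) \<le> D * inverse (1 + \<omega>^2)"
    using exp_lin_bound[OF a g c] by blast
  show ?thesis
  proof (rule Bochner_Integration.integrable_bound)
    show "integrable lborel (\<lambda>\<omega>. D * inverse (1 + \<omega>^2))" using integrable_inv_sq by simp
    show "AE x in lborel. norm (exp (c * \<bar>x\<bar>) * exp (- a * \<bar>x\<bar> powr g)) \<le> norm (D * inverse (1 + x^2))"
      using D by (auto intro!: AE_I2 order_trans[OF _ abs_ge_self])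
  qed measurable
qed

definition cc :: "real \<Rightarrow> real \<Rightarrow> nat \<Rightarrow> complex" where
  "cc b g k = (\<integral>\<omega>. GG b g \<omega> * (- \<i> * of_real \<omega>) ^ k \<partial>lborel) / fact k"

lemma hh_powser:
  assumes cg: "cos (g * pi / 2) \<noteq> 0" and a0: "a0 > 0" and g: "g > 1"
  shows "(\<lambda>k. cc (alpha_tilde0 a0 g) g k * z ^ k) sums
           (\<integral>\<omega>. GG (alpha_tilde0 a0 g) g \<omega> * exp (- \<i> * of_real \<omega> * z) \<partial>lborel)"
proof -
  define b where "b = alpha_tilde0 a0 g"
  have nG: "norm (GG b g \<omega>) = exp (- a0 * \<bar>\<omega>\<bar> powr g)" for \<omega>
    unfolding b_def by (rule norm_GG[OF cg])
  define f where "f k \<omega> = (GG b g \<omega> * (- \<i> * of_real \<omega>) ^ k) * (z ^ k / fact k)" for k \<omega>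
  have nf: "norm (f k \<omega>) = exp (- a0 * \<bar>\<omega>\<bar> powr g) * ((\<bar>\<omega>\<bar> * norm z) ^ k / fact k)" for k \<omega>
    by (simp add: f_def norm_mult nG norm_power norm_divide power_mult_distrib)
  have intE0: "integrable lborel (\<lambda>\<omega>. exp (norm z * \<bar>\<omega>\<bar>) * exp (- a0 * \<bar>\<omega>\<bar> powr g))"
    by (rule integrable_exp_lin[OF a0 g]) simp
  have intE: "integrable lborel (\<lambda>\<omega>. exp (- a0 * \<bar>\<omega>\<bar> powr g) * exp (\<bar>\<omega>\<bar> * norm z))"
    using intE0 by (simp add: mult.commute)
  have fm[measurable]: "f k \<in> borel_measurable lborel" for k unfolding f_def by measurable
  have nfle: "norm (f k \<omega>) \<le> exp (- a0 * \<bar>\<omega>\<bar> powr g) * exp (\<bar>\<omega>\<bar> * norm z)" for k \<omega>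
  proof -
    have "(\<bar>\<omega>\<bar> * norm z) ^ k / fact k \<le> exp (\<bar>\<omega>\<bar> * norm z)" by (rule exp_ge_term) simp
    then have "exp (- a0 * \<bar>\<omega>\<bar> powr g) * ((\<bar>\<omega>\<bar> * norm z) ^ k / fact k) \<le> exp (- a0 * \<bar>\<omega>\<bar> powr g) * exp (\<bar>\<omega>\<bar> * norm z)"
      by (rule mult_left_mono) simp
    then show ?thesis unfolding nf .
  qed
  have intf: "integrable lborel (f k)" for k
  proof (rule Bochner_Integration.integrable_bound[OF intE])
    show "AE x in lborel. norm (f k x) \<le> norm (exp (- a0 * \<bar>x\<bar> powr g) * exp (\<bar>x\<bar> * norm z))"
      using nfle by (auto intro!: AE_I2 order_trans[OF _ abs_ge_self])
  qed measurable
  have sumn: "summable (\<lambda>k. norm (f k \<omega>))" for \<omega>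
  proof -
    have "summable (\<lambda>k. (\<bar>\<omega>\<bar> * norm z) ^ k / fact k)"
      using exp_converges[of "\<bar>\<omega>\<bar> * norm z"] by (simp add: sums_iff divide_inverse mult.commute)
    then show ?thesis unfolding nf by (rule summable_mult)
  qed
  have sumsn: "(\<lambda>k. norm (f k \<omega>)) sums (exp (- a0 * \<bar>\<omega>\<bar> powr g) * exp (\<bar>\<omega>\<bar> * norm z))" for \<omega>
  proof -
    have "(\<lambda>k. (\<bar>\<omega>\<bar> * norm z) ^ k / fact k) sums exp (\<bar>\<omega>\<bar> * norm z)"
      using exp_converges[of "\<bar>\<omega>\<bar> * norm z"] by (simp add: divide_inverse mult.commute)
    then have "(\<lambda>k. exp (- a0 * \<bar>\<omega>\<bar> powr g) * ((\<bar>\<omega>\<bar> * norm z) ^ k / fact k)) sums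
        (exp (- a0 * \<bar>\<omega>\<bar> powr g) * exp (\<bar>\<omega>\<bar> * norm z))" by (rule sums_mult)
    then show ?thesis unfolding nf .
  qed
  have sumint: "summable (\<lambda>k. \<integral>\<omega>. norm (f k \<omega>) \<partial>lborel)"
  proof (rule summable_suminf_not_top)
    show "\<And>k. 0 \<le> (\<integral>\<omega>. norm (f k \<omega>) \<partial>lborel)" by simp
    have "(\<Sum>k. ennreal (\<integral>\<omega>. norm (f k \<omega>) \<partial>lborel)) = (\<Sum>k. \<integral>\<^sup>+\<omega>. ennreal (norm (f k \<omega>)) \<partial>lborel)"
      by (intro suminf_cong nn_integral_eq_integral[symmetric] integrable_norm intf) auto
    also have "\<dots> = (\<integral>\<^sup>+\<omega>. (\<Sum>k. ennreal (norm (f k \<omega>))) \<partial>lborel)"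
      by (rule nn_integral_suminf[symmetric]) measurable
    also have "\<dots> = (\<integral>\<^sup>+\<omega>. ennreal (exp (- a0 * \<bar>\<omega>\<bar> powr g) * exp (\<bar>\<omega>\<bar> * norm z)) \<partial>lborel)"
      by (intro nn_integral_cong) (simp add: suminf_ennreal2 sumn sums_unique[OF sumsn, symmetric])
    also have "\<dots> = ennreal (\<integral>\<omega>. exp (- a0 * \<bar>\<omega>\<bar> powr g) * exp (\<bar>\<omega>\<bar> * norm z) \<partial>lborel)"
      by (rule nn_integral_eq_integral[OF intE]) simp
    finally show "(\<Sum>k. ennreal (\<integral>\<omega>. norm (f k \<omega>) \<partial>lborel)) \<noteq> \<top>" by simp
  qed
  have sI: "(\<lambda>k. integral\<^sup>L lborel (f k)) sums (\<integral>\<omega>. (\<Sum>k. f k \<omega>) \<partial>lborel)"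
    by (rule sums_integral[OF intf _ sumint]) (simp add: sumn)
  have fsum: "(\<Sum>k. f k \<omega>) = GG b g \<omega> * exp (- \<i> * of_real \<omega> * z)" for \<omega>
  proof -
    have "(\<lambda>k. (- \<i> * of_real \<omega> * z) ^ k /\<^sub>R fact k) sums exp (- \<i> * of_real \<omega> * z)"
      by (rule exp_converges)
    then have "(\<lambda>k. GG b g \<omega> * ((- \<i> * of_real \<omega> * z) ^ k /\<^sub>R fact k)) sums (GG b g \<omega> * exp (- \<i> * of_real \<omega> * z))"
      by (rule sums_mult)
    moreover have "GG b g \<omega> * ((- \<i> * of_real \<omega> * z) ^ k /\<^sub>R fact k) = f k \<omega>" for k
    proof -
      have pw: "(- \<i> * of_real \<omega> * z) ^ k = (- \<i> * of_real \<omega>) ^ k * z ^ k" by (rule power_mult_distrib)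
      show ?thesis unfolding pw f_def by (simp add: scaleR_conv_of_real divide_inverse mult_ac)
    qed
    ultimately show ?thesis by (simp add: sums_unique[symmetric])
  qed
  have fint: "integral\<^sup>L lborel (f k) = cc b g k * z ^ k" for k
    unfolding f_def cc_def integral_mult_left_zero by simp
  show ?thesis using sI unfolding fsum fint b_def .
qed

lemma hh_zero_all:
  assumes cg: "cos (g * pi / 2) \<noteq> 0" and a0: "a0 > 0" and g: "g > 1"
    and neg: "\<And>w. w < 0 \<Longrightarrow> hh (alpha_tilde0 a0 g) g w = 0"
  shows "hh (alpha_tilde0 a0 g) g w = 0"
proof -
  define b where "b = alpha_tilde0 a0 g"
  define F where "F z = (\<Sum>k. cc b g k * z ^ k)" for z
  have S: "(\<lambda>k. cc b g k * z ^ k) sums F z" for z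
    using hh_powser[OF cg a0 g, of z] unfolding F_def b_def[symmetric] by (simp add: sums_iff)
  have Fhh: "F (of_real w) = hh b g w" for w
  proof -
    have "(\<lambda>k. cc b g k * (of_real w) ^ k) sums hh b g w"
      using hh_powser[OF cg a0 g, of "of_real w"] unfolding hh_def b_def by (simp add: mult.assoc)
    then show ?thesis using S sums_unique2 by blast
  qed
  have summ: "summable (\<lambda>k. cc b g k * z ^ k)" for z using S sums_summable by blast
  have cont: "isCont F 0" unfolding F_def by (rule isCont_powser_converges_everywhere[OF summ])
  have F0: "F 0 = 0"
  proof -
    have "(\<lambda>n. of_real (- inverse (real (Suc n)))) \<longlonglongrightarrow> (of_real (- 0) :: complex)"
      by (intro tendsto_of_real tendsto_minus LIMSEQ_inverse_real_of_nat)
    then have "(\<lambda>n. F (of_real (- inverse (real (Suc n))))) \<longlonglongrightarrow> F 0"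
      using cont isCont_tendsto_compose by force
    moreover have "F (of_real (- inverse (real (Suc n)))) = 0" for n
      unfolding Fhh b_def by (rule neg) simp
    ultimately show ?thesis using LIMSEQ_unique[OF _ tendsto_const] by force
  qed
  have c0: "cc b g 0 = 0" using F0 sums_unique2[OF S[of 0] powser_sums_zero] by simp
  have cm: "cc b g m = 0" if m: "m > 0" for m
  proof (rule ccontr)
    assume nz: "cc b g m \<noteq> 0"
    obtain s where s: "0 < s" and snz: "\<And>z. z \<in> cball 0 s - {0} \<Longrightarrow> F z \<noteq> 0"
      using powser_0_nonzero[of 1 0 "cc b g" F m] S F0 nz m by auto
    have "of_real (- s) \<in> cball (0::complex) s - {0}" using s by auto
    then have "F (of_real (- s)) \<noteq> 0" by (rule snz)
    moreover have "F (of_real (- s)) = 0" unfolding Fhh b_def by (rule neg) (use s in simp)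
    ultimately show False by simp
  qed
  have "cc b g k = 0" for k using c0 cm by (cases k) auto
  then have "F z = 0" for z unfolding F_def by simp
  then show ?thesis using Fhh b_def by metis
qed



lemma Re_powr_lower:
  fixes u :: complex and g :: real
  assumes u: "Re u \<ge> 0" and g: "0 < g" "g < 1"
  shows "Re (u powr of_real g) \<ge> norm u powr g * cos (g * pi / 2)"
proof (cases "u = 0")
  case True then show ?thesis by simp
next
  case False
  have Re: "Re (u powr of_real g) = norm u powr g * cos (g * Arg u)"
    using powr_polar[OF False, of g] by (simp add: Re_exp)
  have A: "\<bar>Arg u\<bar> \<le> pi / 2" using u Arg_Re_nonneg by blast
  have "cos (g * pi / 2) \<le> cos \<bar>g * Arg u\<bar>"
  proof (rule cos_monotone_0_pi_le)
    show "0 \<le> \<bar>g * Arg u\<bar>" by simp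
    have "\<bar>g * Arg u\<bar> = g * \<bar>Arg u\<bar>" using g by (simp add: abs_mult)
    also have "\<dots> \<le> g * (pi / 2)" using A g by (intro mult_left_mono) auto
    finally show "\<bar>g * Arg u\<bar> \<le> g * pi / 2" by simp
    show "g * pi / 2 \<le> pi" using g by (simp add: field_simps)
  qed
  also have "cos \<bar>g * Arg u\<bar> = cos (g * Arg u)" by simp
  finally have "cos (g * pi / 2) \<le> cos (g * Arg u)" .
  then show ?thesis unfolding Re by (intro mult_left_mono) auto
qed

lemma cos_pos_g:
  assumes "0 < g" "g < 1"
  shows "cos (g * pi / 2) > 0"
proof (rule cos_gt_zero_pi)
  have "0 < g * pi" using assms by simp
  then show "- (pi / 2) < g * pi / 2" using pi_gt_zero by linarith
  have "g * pi < 1 * pi" by (rule mult_strict_right_mono) (use assms in auto)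
  then show "g * pi / 2 < pi / 2" by simp
qed

definition fz :: "real \<Rightarrow> real \<Rightarrow> real \<Rightarrow> complex \<Rightarrow> complex" where
  "fz b g w z = exp (- (of_real b * (- \<i> * z) powr of_real g)) * exp (- \<i> * z * of_real w)"

lemma fz_real: "fz b g w (of_real \<omega>) = GG b g \<omega> * exp (- \<i> * of_real (\<omega> * w))"
  by (simp add: fz_def GG_def PP_def mult.assoc)

lemma fz_bound:
  assumes a0: "a0 > 0" and g: "0 < g" "g < 1" and z: "Im z \<ge> 0"
  shows "norm (fz (alpha_tilde0 a0 g) g w z) \<le> exp (- a0 * norm z powr g) * exp (w * Im z)"
proof -
  have cpos: "cos (g * pi / 2) > 0" using cos_pos_g[OF g] .
  define b where "b = alpha_tilde0 a0 g"
  have cc: "cos (pi * g / 2) = cos (g * pi / 2)" by (simp add: mult.commute)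
  have bpos: "b > 0" using a0 cpos by (simp add: b_def alpha_tilde0_def cc)
  have bc: "b * cos (g * pi / 2) = a0"
  proof -
    have "cos (pi * g / 2) = cos (g * pi / 2)" by (simp add: mult.commute)
    then show ?thesis using cpos by (simp add: b_def alpha_tilde0_def)
  qed
  have "Re ((- \<i> * z) powr of_real g) \<ge> norm (- \<i> * z) powr g * cos (g * pi / 2)"
    by (rule Re_powr_lower) (use z g in auto)
  also have "norm (- \<i> * z) = norm z" by (simp add: norm_mult)
  finally have R: "Re ((- \<i> * z) powr of_real g) \<ge> norm z powr g * cos (g * pi / 2)" .
  have "b * Re ((- \<i> * z) powr of_real g) \<ge> b * (norm z powr g * cos (g * pi / 2))"
    using R bpos by (intro mult_left_mono) auto
  also have "b * (norm z powr g * cos (g * pi / 2)) = a0 * norm z powr g"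
    using bc by (simp add: algebra_simps)
  finally have R2: "b * Re ((- \<i> * z) powr of_real g) \<ge> a0 * norm z powr g" .
  have "norm (fz b g w z) = exp (- (b * Re ((- \<i> * z) powr of_real g))) * exp (w * Im z)"
    by (simp add: fz_def norm_mult norm_exp_eq_Re mult.commute)
  also have "\<dots> \<le> exp (- a0 * norm z powr g) * exp (w * Im z)"
    using R2 by simp
  finally show ?thesis unfolding b_def .
qed

lemma fz_cont: "g > 0 \<Longrightarrow> continuous_on {z. Im z \<ge> 0} (fz b g w)"
  unfolding fz_def by (intro continuous_intros) auto

lemma fz_holo: "fz b g w holomorphic_on {z. Im z > 0}"
  unfolding fz_def by (intro holomorphic_intros) (auto simp: complex_nonpos_Reals_iff)

lemma contour_est:
  assumes a0: "a0 > 0" and g: "0 < g" "g < 1" and w: "w < 0" and R: "R > 0"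
  shows "norm (integral {-R..R} (\<lambda>x. fz (alpha_tilde0 a0 g) g w (of_real x)))
           \<le> 2 * R * exp (- a0 * R powr g) + 2 * R * exp (w * R)"
proof -
  define f where "f = fz (alpha_tilde0 a0 g) g w"
  define a1 where "a1 = Complex (-R) 0"
  define a2 where "a2 = Complex R 0"
  define a3 where "a3 = Complex R R"
  define a4 where "a4 = Complex (-R) R"
  define S where "S = cbox a1 a3"
  have rp: "rectpath a1 a3 = linepath a1 a2 +++ linepath a2 a3 +++ linepath a3 a4 +++ linepath a4 a1"
    by (simp add: rectpath_def Let_def a1_def a2_def a3_def a4_def complex_eq_iff)
  have SI: "S \<subseteq> {z. Im z \<ge> 0}" by (auto simp: S_def in_cbox_complex_iff a1_def a3_def)
  have contS: "continuous_on S f" unfolding f_def using fz_cont[OF g(1)] SI continuous_on_subset by blast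
  have convS: "convex S" by (simp add: S_def)
  have inS: "a1 \<in> S" "a2 \<in> S" "a3 \<in> S" "a4 \<in> S" using R
    by (auto simp: S_def in_cbox_complex_iff a1_def a2_def a3_def a4_def)
  have cauchy: "(f has_contour_integral 0) (rectpath a1 a3)"
  proof (rule Cauchy_theorem_convex[OF contS convS finite.emptyI])
    fix x assume "x \<in> interior S - {}"
    then have "Im x > 0" by (auto simp: S_def interior_cbox in_box_complex_iff a1_def a3_def)
    moreover have "open {z. Im z > 0}" by (simp add: open_halfspace_Im_gt)
    ultimately show "f field_differentiable at x"
      using fz_holo unfolding f_def by (meson holomorphic_on_imp_differentiable_at mem_Collect_eq)
  next
    show "valid_path (rectpath a1 a3)" by simp
    show "path_image (rectpath a1 a3) \<subseteq> S" unfolding S_def using R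
      by (intro path_image_rectpath_subset_cbox) (auto simp: a1_def a3_def)
    show "pathfinish (rectpath a1 a3) = pathstart (rectpath a1 a3)" by simp
  qed
  have seg: "closed_segment x y \<subseteq> S" if "x \<in> S" "y \<in> S" for x y
    using closed_segment_subset[OF that convS] .
  have ci: "(f has_contour_integral contour_integral (linepath x y) f) (linepath x y)" if "x \<in> S" "y \<in> S" for x y
    by (intro has_contour_integral_integral contour_integrable_continuous_linepath
        continuous_on_subset[OF contS seg[OF that]])
  define I1 where "I1 = contour_integral (linepath a1 a2) f"
  define I2 where "I2 = contour_integral (linepath a2 a3) f"
  define I3 where "I3 = contour_integral (linepath a3 a4) f"
  define I4 where "I4 = contour_integral (linepath a4 a1) f"
  have "(f has_contour_integral (I1 + (I2 + (I3 + I4)))) (rectpath a1 a3)"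
    unfolding rp I1_def I2_def I3_def I4_def
    by (intro has_contour_integral_join ci inS valid_path_join valid_path_linepath) auto
  then have sum0: "I1 + (I2 + (I3 + I4)) = 0" using cauchy has_contour_integral_unique by blast
  have fb: "norm (f z) \<le> exp (- a0 * norm z powr g) * exp (w * Im z)" if "z \<in> S" for z
    unfolding f_def by (rule fz_bound[OF a0 g]) (use that SI in auto)
  have e1: "exp (- a0 * norm z powr g) \<le> 1" for z using a0 by simp
  have e2: "exp (w * Im z) \<le> 1" if "z \<in> S" for z using that SI w by (auto simp: mult_nonpos_nonneg)
  have side: "norm (f z) \<le> exp (- a0 * R powr g)" if "z \<in> S" "\<bar>Re z\<bar> = R" for z
  proof -
    have "R \<le> norm z" using that(2) abs_Re_le_cmod by metis
    then have "R powr g \<le> norm z powr g" using R g by (intro powr_mono2) auto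
    then have "exp (- a0 * norm z powr g) \<le> exp (- a0 * R powr g)" using a0 by simp
    then have "exp (- a0 * norm z powr g) * exp (w * Im z) \<le> exp (- a0 * R powr g) * 1"
      using e2[OF that(1)] by (intro mult_mono) auto
    then show ?thesis using fb[OF that(1)] by simp
  qed
  have top: "norm (f z) \<le> exp (w * R)" if "z \<in> S" "Im z = R" for z
  proof -
    have "exp (- a0 * norm z powr g) * exp (w * Im z) \<le> 1 * exp (w * R)"
      using e1[of z] that(2) by (intro mult_mono) auto
    then show ?thesis using fb[OF that(1)] by simp
  qed
  have b2: "norm I2 \<le> exp (- a0 * R powr g) * norm (a3 - a2)"
  proof (rule has_contour_integral_bound_linepath[OF ci[OF inS(2,3)] _, folded I2_def])
    show "0 \<le> exp (- a0 * R powr g)" by simp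
    fix z assume z: "z \<in> closed_segment a2 a3"
    then have "Re z = R" by (auto simp: closed_segment_same_Re a2_def a3_def)
    then show "norm (f z) \<le> exp (- a0 * R powr g)" using side seg[OF inS(2,3)] z R by auto
  qed
  have b4: "norm I4 \<le> exp (- a0 * R powr g) * norm (a1 - a4)"
  proof (rule has_contour_integral_bound_linepath[OF ci[OF inS(4,1)] _, folded I4_def])
    show "0 \<le> exp (- a0 * R powr g)" by simp
    fix z assume z: "z \<in> closed_segment a4 a1"
    then have "Re z = - R" by (auto simp: closed_segment_same_Re a1_def a4_def)
    then show "norm (f z) \<le> exp (- a0 * R powr g)" using side seg[OF inS(4,1)] z R by auto
  qed
  have b3: "norm I3 \<le> exp (w * R) * norm (a4 - a3)"
  proof (rule has_contour_integral_bound_linepath[OF ci[OF inS(3,4)] _, folded I3_def])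
    show "0 \<le> exp (w * R)" by simp
    fix z assume z: "z \<in> closed_segment a3 a4"
    then have "Im z = R" by (auto simp: closed_segment_same_Im a3_def a4_def)
    then show "norm (f z) \<le> exp (w * R)" using top seg[OF inS(3,4)] z by auto
  qed
  have d1: "a3 - a2 = \<i> * of_real R" by (simp add: a2_def a3_def complex_eq_iff)
  have d2: "a1 - a4 = - (\<i> * of_real R)" by (simp add: a1_def a4_def complex_eq_iff)
  have d3: "a4 - a3 = of_real (- 2 * R)" by (simp add: a3_def a4_def complex_eq_iff)
  have n: "norm (a3 - a2) = R" "norm (a1 - a4) = R" "norm (a4 - a3) = 2 * R"
    unfolding d1 d2 d3 using R by (auto simp: norm_mult)
  have "I1 = - (I2 + I3 + I4)" using sum0 by (simp add: algebra_simps eq_neg_iff_add_eq_0)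
  then have "norm I1 \<le> norm I2 + norm I3 + norm I4"
    by (metis norm_minus_cancel norm_triangle_le norm_triangle_ineq add_mono order_refl order_trans)
  also have "\<dots> \<le> 2 * R * exp (- a0 * R powr g) + 2 * R * exp (w * R)"
    using b2 b3 b4 n by (simp add: algebra_simps)
  finally have nI1: "norm I1 \<le> 2 * R * exp (- a0 * R powr g) + 2 * R * exp (w * R)" .
  have "I1 = integral {Re a1..Re a2} (\<lambda>x. f (of_real x))"
    unfolding I1_def using R by (intro contour_integral_linepath_Reals_eq) (auto simp: a1_def a2_def complex_is_Real_iff)
  then show ?thesis using nI1 by (simp add: a1_def a2_def f_def)
qed

lemma hh_neg_zero:
  assumes a0: "a0 > 0" and g: "0 < g" "g < 1" and w: "w < 0"
  shows "hh (alpha_tilde0 a0 g) g w = 0"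
proof -
  define b where "b = alpha_tilde0 a0 g"
  define F where "F \<omega> = GG b g \<omega> * exp (- \<i> * of_real (\<omega> * w))" for \<omega>
  have cg: "cos (g * pi / 2) \<noteq> 0"
  proof -
    have "cos (g * pi / 2) > 0" using cos_pos_g[OF g] .
    then show ?thesis by simp
  qed
  have intF: "integrable lborel F" unfolding F_def b_def by (rule integrable_GG[OF cg a0 g(1)])
  have Fm[measurable]: "F \<in> borel_measurable lborel" using intF by auto
  have eqn: "(LINT x:{-R..R}|lborel. F x) = integral {-R..R} (\<lambda>x. fz b g w (of_real x))" for R
  proof -
    have "set_integrable lborel {-R..R} F" unfolding set_integrable_def
      by (rule integrable_mult_indicator) (auto intro: intF)
    then have "(LINT x:{-R..R}|lborel. F x) = integral {-R..R} F" by (rule set_borel_integral_eq_integral)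
    moreover have FF: "(\<lambda>x. fz b g w (of_real x)) = F" by (simp add: fun_eq_iff F_def fz_real)
    ultimately show ?thesis by simp
  qed
  have lim1: "(\<lambda>n. LINT x:{-real (Suc n)..real (Suc n)}|lborel. F x) \<longlonglongrightarrow> integral\<^sup>L lborel F"
    unfolding set_lebesgue_integral_def
  proof (rule integral_dominated_convergence[where w = "\<lambda>x. norm (F x)"])
    show "F \<in> borel_measurable lborel" by simp
    show "\<And>i. (\<lambda>x. indicator {- real (Suc i)..real (Suc i)} x *\<^sub>R F x) \<in> borel_measurable lborel" by measurable
    show "integrable lborel (\<lambda>x. norm (F x))" using intF by simp
    show "AE x in lborel. (\<lambda>i. indicator {- real (Suc i)..real (Suc i)} x *\<^sub>R F x) \<longlonglongrightarrow> F x"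
    proof (intro AE_I2)
      fix x :: real
      obtain N where N: "\<bar>x\<bar> \<le> real N" using real_arch_simple by blast
      have "eventually (\<lambda>i. indicator {- real (Suc i)..real (Suc i)} x *\<^sub>R F x = F x) sequentially"
        using eventually_ge_at_top[of N] by eventually_elim (use N in \<open>auto simp: indicator_def\<close>)
      then show "(\<lambda>i. indicator {- real (Suc i)..real (Suc i)} x *\<^sub>R F x) \<longlonglongrightarrow> F x"
        by (rule tendsto_eventually)
    qed
    show "\<And>i. AE x in lborel. norm (indicator {- real (Suc i)..real (Suc i)} x *\<^sub>R F x) \<le> norm (F x)"
      by (intro AE_I2) (auto simp: indicator_def)
  qed
  have lim0: "(\<lambda>n. LINT x:{-real (Suc n)..real (Suc n)}|lborel. F x) \<longlonglongrightarrow> 0"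
  proof (rule Lim_null_comparison)
    show "eventually (\<lambda>n. norm (LINT x:{-real (Suc n)..real (Suc n)}|lborel. F x)
        \<le> 2 * real (Suc n) * exp (- a0 * real (Suc n) powr g) + 2 * real (Suc n) * exp (w * real (Suc n))) sequentially"
      unfolding eqn b_def by (intro always_eventually allI contour_est[OF a0 g w]) simp
    have l1: "((\<lambda>x::real. 2 * x * exp (- a0 * x powr g)) \<longlongrightarrow> 0) at_top" using a0 g by real_asymp
    have l2: "((\<lambda>x::real. 2 * x * exp (w * x)) \<longlongrightarrow> 0) at_top" using w by real_asymp
    have "((\<lambda>x::real. 2 * x * exp (- a0 * x powr g) + 2 * x * exp (w * x)) \<longlongrightarrow> 0) at_top"
      using tendsto_add[OF l1 l2] by simp
    moreover have "filterlim (\<lambda>n. real (Suc n)) at_top sequentially"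
      by (rule filterlim_compose[OF filterlim_real_sequentially filterlim_Suc])
    ultimately show "(\<lambda>n. 2 * real (Suc n) * exp (- a0 * real (Suc n) powr g) + 2 * real (Suc n) * exp (w * real (Suc n))) \<longlonglongrightarrow> 0"
      by (rule filterlim_compose)
  qed
  have "integral\<^sup>L lborel F = 0" using LIMSEQ_unique[OF lim1 lim0] .
  then show ?thesis unfolding hh_def F_def b_def .
qed



lemma param:
  fixes g q w a :: real
  assumes g: "g > 0" "g \<noteq> 1" and q: "q > 0"
  defines "r \<equiv> q powr (g / (g - 1))"
  shows "r > 0" "r powr (-1/g) * (r powr (1/g) * (w + a * q) - a * r) = w"
proof -
  show r: "r > 0" using q by (simp add: r_def)
  have g1: "g - 1 \<noteq> 0" using g by simp
  have rq: "r powr ((g - 1) / g) = q"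
    using q g g1 by (simp add: r_def powr_powr)
  have "r powr (1/g) * r powr ((g - 1) / g) = r powr (1/g + (g - 1) / g)" by (simp add: powr_add)
  also have "1/g + (g - 1) / g = 1" using g by (simp add: field_simps)
  finally have rr: "r powr (1/g) * q = r" using r rq by simp
  have "r powr (1/g) * (w + a * q) - a * r = r powr (1/g) * w"
    using rr by (simp add: algebra_simps)
  moreover have "r powr (-1/g) * r powr (1/g) = 1"
    using r by (simp add: powr_add[symmetric])
  ultimately show "r powr (-1/g) * (r powr (1/g) * (w + a * q) - a * r) = w"
    by (metis mult.assoc mult_1)
qed

lemma cos_nonzero:
  assumes "g > 0" "g \<notin> \<nat>"
  shows "cos (g * pi / 2) \<noteq> 0"
proof
  assume "cos (g * pi / 2) = 0"
  then obtain i :: int where i: "odd i" "g * pi / 2 = of_int i * (pi / 2)"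
    by (auto simp: cos_zero_iff_int)
  then have gi: "g = of_int i" by (simp add: field_simps)
  then have "i > 0" using assms by simp
  then have "g = of_nat (nat i)" using gi by simp
  then show False using assms(2) by (metis of_nat_in_Nats)
qed

theorem theorem3:
  fixes a0 a1 \<gamma> :: real
  assumes "a0 > 0" and "\<gamma> > 0" and "\<gamma> \<notin> \<nat>"
  shows "(\<gamma> > 1 \<longrightarrow> \<not> causal (K_pl a0 a1 \<gamma> :: 'a::euclidean_space \<Rightarrow> real \<Rightarrow> complex))
       \<and> (\<gamma> < 1 \<longrightarrow> (causal (K_pl a0 a1 \<gamma> :: 'a \<Rightarrow> real \<Rightarrow> complex) \<longleftrightarrow> a1 \<ge> 0))"
proof (intro conjI impI)
  have cg: "cos (\<gamma> * pi / 2) \<noteq> 0" using cos_nonzero assms(2,3) by blast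
  define b where "b = alpha_tilde0 a0 \<gamma>"
  obtain w0 where w0: "hh b \<gamma> w0 \<noteq> 0" using hh_nonzero[OF cg assms(1,2)] unfolding b_def by blast
  {
    assume g1: "\<gamma> > 1"
    show "\<not> causal (K_pl a0 a1 \<gamma> :: 'a::euclidean_space \<Rightarrow> real \<Rightarrow> complex)"
    proof
      assume "causal (K_pl a0 a1 \<gamma> :: 'a::euclidean_space \<Rightarrow> real \<Rightarrow> complex)"
      then have H: "\<And>r t. r > 0 \<Longrightarrow> t < 0 \<Longrightarrow> hh b \<gamma> (r powr (-1/\<gamma>) * (t - a1 * r)) = 0"
        using causal_iff[OF assms(2)] unfolding b_def by blast
      have neg: "hh b \<gamma> w = 0" if w: "w < 0" for w
      proof -
        define q where "q = - w / (2 * (\<bar>a1\<bar> + 1))"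
        have q: "q > 0" unfolding q_def using w by (intro divide_pos_pos) (auto intro: add_nonneg_pos)
        define r where "r = q powr (\<gamma> / (\<gamma> - 1))"
        have gne: "\<gamma> \<noteq> 1" using g1 by simp
        note P = param(1)[OF assms(2) gne q, folded r_def] param(2)[OF assms(2) gne q, of w a1, folded r_def]
        have "a1 * q \<le> \<bar>a1\<bar> * q" using q by (intro mult_right_mono) auto
        also have "\<bar>a1\<bar> * q < (\<bar>a1\<bar> + 1) * q" using q by simp
        also have "(\<bar>a1\<bar> + 1) * q = - w / 2" by (simp add: q_def field_simps)
        finally have "w + a1 * q < 0" using w by simp
        then have "r powr (1/\<gamma>) * (w + a1 * q) < 0" using P(1) by (simp add: mult_pos_neg)
        from H[OF P(1) this] show ?thesis unfolding P(2) .
      qed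
      have "hh b \<gamma> w0 = 0" unfolding b_def by (rule hh_zero_all[OF cg assms(1) g1]) (use neg b_def in simp)
      then show False using w0 by simp
    qed
  }
  {
    assume g1: "\<gamma> < 1"
    show "causal (K_pl a0 a1 \<gamma> :: 'a \<Rightarrow> real \<Rightarrow> complex) \<longleftrightarrow> a1 \<ge> 0"
    proof
      assume "causal (K_pl a0 a1 \<gamma> :: 'a \<Rightarrow> real \<Rightarrow> complex)"
      then have H: "\<And>r t. r > 0 \<Longrightarrow> t < 0 \<Longrightarrow> hh b \<gamma> (r powr (-1/\<gamma>) * (t - a1 * r)) = 0"
        using causal_iff[OF assms(2)] unfolding b_def by blast
      show "a1 \<ge> 0"
      proof (rule ccontr)
        assume "\<not> a1 \<ge> 0"
        then have a1: "a1 < 0" by simp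
        define q where "q = (\<bar>w0\<bar> + 1) / (- a1)"
        have q: "q > 0" unfolding q_def using a1 by (intro divide_pos_pos) (auto intro: add_nonneg_pos)
        define r where "r = q powr (\<gamma> / (\<gamma> - 1))"
        have gne: "\<gamma> \<noteq> 1" using g1 by simp
        note P = param(1)[OF assms(2) gne q, folded r_def] param(2)[OF assms(2) gne q, of w0 a1, folded r_def]
        have "a1 * q = - (\<bar>w0\<bar> + 1)" using a1 by (simp add: q_def)
        then have "w0 + a1 * q < 0" by simp
        then have "r powr (1/\<gamma>) * (w0 + a1 * q) < 0" using P(1) by (simp add: mult_pos_neg)
        from H[OF P(1) this] have "hh b \<gamma> w0 = 0" unfolding P(2) .
        then show False using w0 by simp
      qed
    next
      assume a1: "a1 \<ge> 0"
      show "causal (K_pl a0 a1 \<gamma> :: 'a \<Rightarrow> real \<Rightarrow> complex)"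
        unfolding causal_iff[OF assms(2)]
      proof (intro allI impI)
        fix r t :: real assume r: "r > 0" and t: "t < 0"
        have "a1 * r \<ge> 0" using a1 r by simp
        then have "t - a1 * r < 0" using t by linarith
        then have "r powr (-1/\<gamma>) * (t - a1 * r) < 0" using r by (simp add: mult_pos_neg)
        then show "hh (alpha_tilde0 a0 \<gamma>) \<gamma> (r powr (-1/\<gamma>) * (t - a1 * r)) = 0"
          by (rule hh_neg_zero[OF assms(1,2) g1])
      qed
    qed
  }
qed


end
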